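(* Let $\theta>1$, $r\in(\theta^{-1},\theta^{-1/2}]$ and $s=\max\big(1,\frac{\ln\theta}{\ln(r\theta)}-2\big)$. Let $(P_1,\dots,P_n)$ be a random price sequence with values in $[1,\theta]$ and maximum $P^*$, and suppose the prediction is deterministic, $Y=y$ almost surely for a fixed $y\in[1,\theta]$. Then \[ \frac{\mathbb{E}[\mathsf{A}^1_r(P,Y)]}{\mathbb{E}[P^*]}\ \ge\ \frac1{r\theta}\,\Upsilon(y),\qquad \Upsilon(y):=\frac{\mathbb{E}\big[P^*\,\mathcal{E}(P^*,y)^{s}\big]}{\mathbb{E}[P^*]}. \]
   Context: One-max search: fix $\theta>1$. Prices $p_1,\dots,p_n\in[1,\theta]$ are revealed one at a time; the algorithm receives at the start a prediction $y\in[1,\theta]$ of the maximum price. At each step it irrevocably accepts the current price (payoff = that price) or rejects it; if nothing is accepted the payoff is $1$. Let $\varphi_r(z)=\frac{r\theta-1}{1-r}+\frac{1-r^2\theta}{1-r}\cdot\frac{z}{r\theta}$ and $\Phi^1_r(z)=\max(r\theta,\varphi_r(z))$; $\mathsf{A}^1_r$ accepts the first price $p_i\ge\Phi^1_r(y)$, and $\mathsf{A}^1_r(P,Y)$ is its payoff on the realized prices and prediction. $\mathcal{E}(a,b)=\min\{a/b,b/a\}$. *)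

theory Defs
  imports "HOL-Probability.Probability"
begin

definition phi_r :: "real \<Rightarrow> real \<Rightarrow> real \<Rightarrow> real" where
  "phi_r \<theta> r z = (r*\<theta> - 1)/(1 - r) + (1 - r^2*\<theta>)/(1 - r) * (z/(r*\<theta>))"

definition Phi1 :: "real \<Rightarrow> real \<Rightarrow> real \<Rightarrow> real" where
  "Phi1 \<theta> r z = max (r*\<theta>) (phi_r \<theta> r z)"

definition A1 :: "real \<Rightarrow> real \<Rightarrow> nat \<Rightarrow> (nat \<Rightarrow> real) \<Rightarrow> real \<Rightarrow> real" where
  "A1 \<theta> r n p y =
     (case find (\<lambda>x. Phi1 \<theta> r y \<le> x) (map p [0..<n]) of None \<Rightarrow> 1 | Some x \<Rightarrow> x)"

definition maxprice :: "nat \<Rightarrow> (nat \<Rightarrow> real) \<Rightarrow> real" where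
  "maxprice n p = Max (p ` {..<n})"

definition Eff :: "real \<Rightarrow> real \<Rightarrow> real" where
  "Eff a b = min (a/b) (b/a)"

end

theory Submission
  imports Defs
begin

lemma conv_key:
  assumes th: "\<theta> > 1" and r1: "1/\<theta> < r" and r2: "r^2*\<theta> \<le> 1"
    and sl: "ln \<theta> \<le> (s+2) * ln (r*\<theta>)" and s1: "s \<ge> 1"
    and y1: "r*\<theta> \<le> y" and y2: "y \<le> \<theta>"
  shows "(phi_r \<theta> r y / y) powr (s+1) \<le> r*\<theta>/y"
proof -
  have rt: "r*\<theta> > 1" using r1 th by (simp add: field_simps)
  have r0: "r > 0" using r1 th by (smt (verit) divide_pos_pos)
  have rl1: "r < 1" using r2 rt r0 by (smt (verit, ccfv_SIG) mult_le_cancel_right1 power2_eq_square mult.assoc)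
  define \<alpha> where "\<alpha> = (r*\<theta> - 1)/(1 - r)"
  define \<beta> where "\<beta> = (1 - r^2*\<theta>)/(1 - r) / (r*\<theta>)"
  have phi: "phi_r \<theta> r y = \<alpha> + \<beta> * y" unfolding phi_r_def \<alpha>_def \<beta>_def by simp
  have e1: "\<alpha>/(r*\<theta>) + \<beta> = 1"
  proof -
    have "\<alpha>/(r*\<theta>) + \<beta> = ((r*\<theta> - 1) + (1 - r^2*\<theta>))/((1-r)*(r*\<theta>))"
      unfolding \<alpha>_def \<beta>_def by (simp add: add_divide_distrib[symmetric])
    also have "(r*\<theta> - 1) + (1 - r^2*\<theta>) = (1-r)*(r*\<theta>)" by (simp add: algebra_simps power2_eq_square)
    finally show ?thesis using rt rl1 r0 th by simp
  qed
  have e2: "\<alpha>/\<theta> + \<beta> = 1/(r*\<theta>)"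
  proof -
    have "\<alpha>/\<theta> = ((r*\<theta> - 1)*r)/((1-r)*(r*\<theta>))" unfolding \<alpha>_def using r0 th rl1 by (simp add: divide_simps)
    hence "\<alpha>/\<theta> + \<beta> = ((r*\<theta> - 1)*r + (1 - r^2*\<theta>))/((1-r)*(r*\<theta>))"
      unfolding \<beta>_def by (simp only: add_divide_distrib divide_divide_eq_left)
    also have "(r*\<theta> - 1)*r + (1 - r^2*\<theta>) = (1-r)*1" by (simp add: algebra_simps power2_eq_square)
    finally show ?thesis using rt rl1 r0 th by simp
  qed
  define l where "l = (1/y - 1/\<theta>)/(1/(r*\<theta>) - 1/\<theta>)"
  have y0: "y > 0" using y1 rt by linarith
  have dpos: "1/(r*\<theta>) - 1/\<theta> > 0" using r0 th rl1 by (simp add: field_simps)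
  have i1: "1/\<theta> \<le> 1/y" using y0 y2 by (simp add: divide_simps)
  have i2: "1/y \<le> 1/(r*\<theta>)" using y0 y1 rt by (simp add: divide_simps)
  have l0: "l \<ge> 0" unfolding l_def using dpos i1 by simp
  have l1: "l \<le> 1" unfolding l_def using dpos i2 by simp
  have yinv: "1/y = (1-l)/\<theta> + l/(r*\<theta>)"
  proof -
    have a: "l * (1/(r*\<theta>) - 1/\<theta>) = 1/y - 1/\<theta>" using dpos l_def nonzero_eq_divide_eq by (metis less_irrefl)
    have "(1-l)/\<theta> + l/(r*\<theta>) = 1/\<theta> + l * (1/(r*\<theta>) - 1/\<theta>)"
      by (simp add: algebra_simps diff_divide_distrib)
    then show ?thesis using a by simp
  qed
  have w: "phi_r \<theta> r y / y = (1-l) * (1/(r*\<theta>)) + l * 1"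
  proof -
    have "phi_r \<theta> r y / y = \<alpha> * (1/y) + \<beta>" using phi y0 by (simp add: field_simps)
    also have "\<dots> = (1-l) * (\<alpha>/\<theta> + \<beta>) + l * (\<alpha>/(r*\<theta>) + \<beta>)" unfolding yinv
      by (simp add: algebra_simps)
    finally show ?thesis using e1 e2 by simp
  qed
  have cv: "convex_on {0<..} (\<lambda>x::real. x powr (s+1))" by (rule powr_convex) (use s1 in simp)
  have "((1-l) *\<^sub>R (1/(r*\<theta>)) + l *\<^sub>R 1) powr (s+1) \<le> (1-l) * (1/(r*\<theta>)) powr (s+1) + l * 1 powr (s+1)"
    by (rule convex_onD[OF cv]) (use l0 l1 rt in auto)
  hence A: "(phi_r \<theta> r y / y) powr (s+1) \<le> (1-l) * (1/(r*\<theta>)) powr (s+1) + l"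
    using w by simp
  have B: "(1/(r*\<theta>)) powr (s+1) \<le> r"
  proof -
    have lr: "ln r = ln (r*\<theta>) - ln \<theta>" using r0 th by (simp add: ln_mult)
    have "(1/(r*\<theta>)) powr (s+1) = exp ((s+1) * ln (1/(r*\<theta>)))" using rt r0 th by (simp add: powr_def)
    also have "\<dots> = exp (- ((s+1) * ln (r*\<theta>)))" using rt r0 th by (simp add: ln_div)
    also have "\<dots> \<le> exp (ln r)" using sl lr by (simp add: algebra_simps)
    also have "\<dots> = r" using r0 by simp
    finally show ?thesis .
  qed
  have "(1-l) * (1/(r*\<theta>)) powr (s+1) + l \<le> (1-l) * r + l"
    using B l1 by (simp add: mult_left_mono)
  also have "\<dots> = r*\<theta> * ((1-l)/\<theta> + l/(r*\<theta>))" using r0 th by (simp add: field_simps)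
  also have "\<dots> = r*\<theta>/y" using yinv by (metis times_divide_eq_right mult.right_neutral)
  finally show ?thesis using A by linarith
qed


lemma find_app: "find Q (xs @ ys) = (case find Q xs of None \<Rightarrow> find Q ys | Some x \<Rightarrow> Some x)"
  by (induct xs) auto

lemma pointwise:
  assumes th: "\<theta> > 1" and r1: "1/\<theta> < r" and r2: "r \<le> 1 / sqrt \<theta>"
    and sdef: "s = max 1 (ln \<theta> / ln (r*\<theta>) - 2)"
    and n1: "n \<ge> 1" and p: "\<forall>i<n. 1 \<le> p i \<and> p i \<le> \<theta>"
    and y1: "1 \<le> y" and y2: "y \<le> \<theta>"
  shows "1/(r*\<theta>) * (maxprice n p * Eff (maxprice n p) y powr s) \<le> A1 \<theta> r n p y"
proof -
  have rt: "r*\<theta> > 1" using r1 th by (simp add: field_simps)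
  have r0: "r > 0" using r1 th by (smt (verit) divide_pos_pos)
  have r2': "r^2*\<theta> \<le> 1"
  proof -
    have "r^2 \<le> (1/sqrt \<theta>)^2" using r0 r2 by (intro power_mono) auto
    also have "\<dots> = 1/\<theta>" using th by (simp add: power_divide)
    finally show ?thesis using th by (simp add: field_simps)
  qed
  have rl1: "r < 1" using r2' rt r0 by (smt (verit, ccfv_SIG) mult_le_cancel_right1 power2_eq_square mult.assoc)
  have s1: "s \<ge> 1" using sdef by simp
  have lnrt: "ln (r*\<theta>) > 0" using rt by simp
  have sl: "ln \<theta> \<le> (s+2) * ln (r*\<theta>)"
  proof -
    have "ln \<theta> / ln (r*\<theta>) \<le> s + 2" using sdef by simp
    thus ?thesis using lnrt by (simp add: pos_divide_le_eq)
  qed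
  define m where "m = maxprice n p"
  have fin: "finite (p ` {..<n})" and ne: "p ` {..<n} \<noteq> {}" using n1 by (auto simp: lessThan_empty_iff)
  have min: "m \<in> p ` {..<n}" unfolding m_def maxprice_def using Max_in[OF fin ne] .
  have mge: "\<And>i. i < n \<Longrightarrow> p i \<le> m" unfolding m_def maxprice_def using fin by auto
  have m1: "1 \<le> m" and m2: "m \<le> \<theta>" using min p by auto
  define E where "E = Eff m y"
  have E0: "E > 0" unfolding E_def Eff_def using m1 y1 by simp
  have E1: "E \<le> 1"
  proof (cases "m \<le> y")
    case True
    then have "m/y \<le> 1" using m1 by simp
    then show ?thesis by (simp add: E_def Eff_def min_def)
  next
    case False
    then have "y/m \<le> 1" using y1 by simp
    then show ?thesis by (simp add: E_def Eff_def min_def)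
  qed
  have Es: "E powr s \<le> E" using powr_le_one_le[OF E0 E1 s1] .
  have mE: "m * E \<le> y"
  proof -
    have "m * E \<le> m * (y/m)" unfolding E_def Eff_def using m1 by (intro mult_left_mono) auto
    thus ?thesis using m1 by simp
  qed
  have mEs: "m * E powr s \<le> y" using Es mE m1 by (smt (verit) mult_left_mono)
  define \<Phi> where "\<Phi> = Phi1 \<theta> r y"
  have Phge: "\<Phi> \<ge> r*\<theta>" unfolding \<Phi>_def Phi1_def by simp
  define \<beta> where "\<beta> = (1 - r^2*\<theta>)/((1 - r) * (r*\<theta>))"
  have b0: "\<beta> \<ge> 0" unfolding \<beta>_def using r2' rl1 rt by simp
  have b1: "\<beta> \<le> 1" unfolding \<beta>_def using r2' rl1 rt r0
    by (simp add: divide_simps algebra_simps power2_eq_square)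
  have hne: "1 - r \<noteq> 0" "r \<noteq> 0" "\<theta> \<noteq> 0" using rl1 r0 th by auto
  have phiform: "phi_r \<theta> r y = r*\<theta> + \<beta> * (y - r*\<theta>)"
  proof -
    have q1: "(r*\<theta>-1)/(1-r) = (r*\<theta>-1)*(r*\<theta>)/((1-r)*(r*\<theta>))" using hne by simp
    have q2: "(1-r^2*\<theta>)/(1-r) * (y/(r*\<theta>)) = (1-r^2*\<theta>)*y/((1-r)*(r*\<theta>))"
      by (simp only: times_divide_times_eq)
    have "phi_r \<theta> r y = ((r*\<theta>-1)*(r*\<theta>) + (1-r^2*\<theta>)*y)/((1-r)*(r*\<theta>))"
      unfolding phi_r_def q1 q2 by (simp only: add_divide_distrib)
    also have "\<dots> = (r*\<theta>*((1-r)*(r*\<theta>)) + (1-r^2*\<theta>)*(y - r*\<theta>))/((1-r)*(r*\<theta>))"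
      by (simp add: algebra_simps power2_eq_square)
    also have "\<dots> = r*\<theta>*((1-r)*(r*\<theta>))/((1-r)*(r*\<theta>)) + (1-r^2*\<theta>)*(y - r*\<theta>)/((1-r)*(r*\<theta>))"
      by (simp only: add_divide_distrib)
    also have "\<dots> = r*\<theta> + \<beta> * (y - r*\<theta>)" unfolding \<beta>_def using hne
      by (simp only: nonzero_mult_div_cancel_right mult_eq_0_iff de_Morgan_disj not_False_eq_True times_divide_eq_left simp_thms)
    finally show ?thesis .
  qed
  have phiy: "r*\<theta> * phi_r \<theta> r y - y = r*(r*\<theta>-1)*(\<theta>-y)/(1-r)"
  proof -
    have q3: "r*\<theta> * ((1-r^2*\<theta>)/(1-r) * (y/(r*\<theta>))) = (1-r^2*\<theta>)*y/(1-r)"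
      using hne by simp
    have q4: "r*\<theta> * ((r*\<theta>-1)/(1-r)) = (r*\<theta>-1)*(r*\<theta>)/(1-r)" by simp
    have "r*\<theta> * phi_r \<theta> r y = ((r*\<theta>-1)*(r*\<theta>) + (1-r^2*\<theta>)*y)/(1-r)"
      unfolding phi_r_def distrib_left q3 q4 by (simp only: add_divide_distrib)
    also have "\<dots> = (r*(r*\<theta>-1)*(\<theta>-y) + y*(1-r))/(1-r)"
      by (simp add: algebra_simps power2_eq_square)
    also have "\<dots> = r*(r*\<theta>-1)*(\<theta>-y)/(1-r) + y" using hne by (simp add: add_divide_distrib)
    finally show ?thesis by simp
  qed
  show ?thesis
  proof (cases "\<exists>i<n. \<Phi> \<le> p i")
    case True
    then have nn: "find (\<lambda>x. \<Phi> \<le> x) (map p [0..<n]) \<noteq> None"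
      by (auto simp: find_None_iff)
    then obtain x where x: "find (\<lambda>x. \<Phi> \<le> x) (map p [0..<n]) = Some x" by blast
    then have "\<Phi> \<le> x" by (auto simp: find_Some_iff)
    have A: "A1 \<theta> r n p y = x" unfolding A1_def using x \<Phi>_def by simp
    have yP: "y \<le> r*\<theta> * \<Phi>"
    proof (cases "y \<le> r*\<theta>")
      case True
      then show ?thesis using Phge rt by (smt (verit) mult_le_cancel_left1)
    next
      case False
      have "y \<le> r*\<theta> * phi_r \<theta> r y" using phiy rl1 r0 rt y2
        by (smt (verit) divide_nonneg_pos mult_nonneg_nonneg)
      also have "\<dots> \<le> r*\<theta> * \<Phi>" unfolding \<Phi>_def Phi1_def using rt by (intro mult_left_mono) auto
      finally show ?thesis .
    qed
    have "1/(r*\<theta>) * (m * E powr s) \<le> 1/(r*\<theta>) * (r*\<theta>*\<Phi>)"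
      using mEs yP rt by (intro mult_left_mono) auto
    also have "\<dots> = \<Phi>" using hne by simp
    finally show ?thesis using A \<open>\<Phi> \<le> x\<close> m_def E_def by simp
  next
    case False
    then have "find (\<lambda>x. \<Phi> \<le> x) (map p [0..<n]) = None"
      by (auto simp: find_None_iff)
    then have A: "A1 \<theta> r n p y = 1" unfolding A1_def \<Phi>_def by simp
    have mP: "m < \<Phi>" using min False by auto
    have "m * E powr s \<le> r*\<theta>"
    proof (cases "m \<le> r*\<theta>")
      case True
      have "m * E powr s \<le> m * 1" using E0 E1 s1 m1
        by (intro mult_left_mono) (auto simp: powr_le1)
      then show ?thesis using True by simp
    next
      case False
      then have Pphi: "\<Phi> = phi_r \<theta> r y" using mP unfolding \<Phi>_def Phi1_def by auto
      have yr: "y > r*\<theta>"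
      proof (rule ccontr)
        assume "\<not> y > r*\<theta>"
        then have "\<beta> * (y - r*\<theta>) \<le> 0" using b0 by (simp add: mult_nonneg_nonpos)
        then show False using phiform Pphi mP False by linarith
      qed
      have phile: "phi_r \<theta> r y \<le> y"
      proof -
        have "\<beta> * (y - r*\<theta>) \<le> 1 * (y - r*\<theta>)" using b1 yr by (intro mult_right_mono) auto
        thus ?thesis using phiform by simp
      qed
      have my: "m < y" using mP Pphi phile by simp
      have y0: "y > 0" using y1 by simp
      have Em: "E = m/y" unfolding E_def Eff_def using my m1 y0
        by (simp add: min_def divide_simps mult_mono)
      have "m * E powr s = y * (m/y) powr (s+1)"
        using Em m1 y0 by (simp add: powr_add)
      also have "(m/y) powr (s+1) \<le> (phi_r \<theta> r y / y) powr (s+1)"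
        using mP Pphi m1 y0 s1 by (intro powr_mono2) (auto simp: divide_right_mono)
      also have "\<dots> \<le> r*\<theta>/y"
        by (rule conv_key[OF th r1 r2' sl s1]) (use yr y2 in auto)
      finally show ?thesis using y0 by (simp add: mult_left_mono)
    qed
    then have "1/(r*\<theta>) * (m * E powr s) \<le> 1/(r*\<theta>) * (r*\<theta>)"
      using rt by (intro mult_left_mono) auto
    then show ?thesis using A m_def E_def hne by simp
  qed
qed

lemma A1_Suc: "A1 \<theta> r (Suc n) p y =
  (if (\<forall>j<n. p j < Phi1 \<theta> r y) then (if Phi1 \<theta> r y \<le> p n then p n else 1) else A1 \<theta> r n p y)"
proof (cases "\<forall>j<n. p j < Phi1 \<theta> r y")
  case True
  then have "find (\<lambda>x. Phi1 \<theta> r y \<le> x) (map p [0..<n]) = None"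
    by (auto simp: find_None_iff)
  then show ?thesis using True by (simp add: A1_def find_app)
next
  case False
  then obtain x where "find (\<lambda>x. Phi1 \<theta> r y \<le> x) (map p [0..<n]) = Some x"
    by (cases "find (\<lambda>x. Phi1 \<theta> r y \<le> x) (map p [0..<n])") (auto simp: find_None_iff not_less)
  then show ?thesis using False by (auto simp add: A1_def find_app)
qed

lemma A1_meas:
  assumes [measurable]: "\<And>i. (\<lambda>\<omega>. P \<omega> i) \<in> borel_measurable M"
  shows "(\<lambda>\<omega>. A1 \<theta> r n (P \<omega>) y) \<in> borel_measurable M"
proof (induct n)
  case 0
  then show ?case by (simp add: A1_def)
next
  case (Suc n)
  note [measurable] = Suc
  show ?case unfolding A1_Suc by measurable
qed

lemma A1_cong: "(\<And>i. i < n \<Longrightarrow> p i = q i) \<Longrightarrow> A1 \<theta> r n p y = A1 \<theta> r n q y"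
  unfolding A1_def by (metis (mono_tags, lifting) atLeastLessThan_iff map_eq_conv set_upt)

lemma max_cong: "(\<And>i. i < n \<Longrightarrow> p i = q i) \<Longrightarrow> maxprice n p = maxprice n q"
  unfolding maxprice_def by (metis image_cong lessThan_iff)


lemma A1_range: "A1 \<theta> r n p y \<in> insert 1 (p ` {..<n})"
proof (cases "find (\<lambda>x. Phi1 \<theta> r y \<le> x) (map p [0..<n])")
  case None
  then show ?thesis by (simp add: A1_def)
next
  case (Some x)
  then have "x \<in> set (map p [0..<n])" by (auto simp: find_Some_iff)
  then show ?thesis using Some by (auto simp: A1_def)
qed

theorem corollary2:
  fixes M :: "'a measure" and P :: "'a \<Rightarrow> nat \<Rightarrow> real"
    and \<theta> r y s :: real and n :: nat
  assumes "prob_space M"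
    and "\<theta> > 1"
    and "1/\<theta> < r" and "r \<le> 1 / sqrt \<theta>"
    and "s = max 1 (ln \<theta> / ln (r*\<theta>) - 2)"
    and "n \<ge> 1"
    and "\<forall>i<n. (\<lambda>\<omega>. P \<omega> i) \<in> borel_measurable M"
    and "\<forall>\<omega>\<in>space M. \<forall>i<n. 1 \<le> P \<omega> i \<and> P \<omega> i \<le> \<theta>"
    and "1 \<le> y" and "y \<le> \<theta>"
  shows "(\<integral>\<omega>. A1 \<theta> r n (P \<omega>) y \<partial>M) / (\<integral>\<omega>. maxprice n (P \<omega>) \<partial>M)
         \<ge> 1/(r*\<theta>) *
           ((\<integral>\<omega>. maxprice n (P \<omega>) * Eff (maxprice n (P \<omega>)) y powr s \<partial>M)
             / (\<integral>\<omega>. maxprice n (P \<omega>) \<partial>M))"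
proof -
  interpret ps: prob_space M by fact
  note th = assms(2) and r1 = assms(3) and r2 = assms(4) and sdef = assms(5) and n1 = assms(6)
    and Pm = assms(7) and Pb = assms(8) and y1 = assms(9) and y2 = assms(10)
  have rt: "r*\<theta> > 1" using r1 th by (simp add: field_simps)
  define Q where "Q \<omega> i = (if i < n then P \<omega> i else 1)" for \<omega> i
  have measQ[measurable]: "(\<lambda>\<omega>. Q \<omega> i) \<in> borel_measurable M" for i
    using Pm by (cases "i < n") (auto simp: Q_def)
  have eqA: "A1 \<theta> r n (P \<omega>) y = A1 \<theta> r n (Q \<omega>) y" for \<omega>
    by (rule A1_cong) (simp add: Q_def)
  have eqM: "maxprice n (P \<omega>) = maxprice n (Q \<omega>)" for \<omega>
    by (rule max_cong) (simp add: Q_def)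
  have measA: "(\<lambda>\<omega>. A1 \<theta> r n (P \<omega>) y) \<in> borel_measurable M"
    unfolding eqA by (rule A1_meas) (rule measQ)
  have measM[measurable]: "(\<lambda>\<omega>. maxprice n (P \<omega>)) \<in> borel_measurable M"
    unfolding eqM maxprice_def by (rule borel_measurable_Max) (use Pm in auto)
  have measR: "(\<lambda>\<omega>. maxprice n (P \<omega>) * Eff (maxprice n (P \<omega>)) y powr s) \<in> borel_measurable M"
    unfolding Eff_def by measurable
  have fin: "finite (P \<omega> ` {..<n})" and ne: "P \<omega> ` {..<n} \<noteq> {}" for \<omega>
    using n1 by (auto simp: lessThan_empty_iff)
  have Mb: "1 \<le> maxprice n (P \<omega>) \<and> maxprice n (P \<omega>) \<le> \<theta>" if "\<omega> \<in> space M" for \<omega>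
  proof -
    have "maxprice n (P \<omega>) \<in> P \<omega> ` {..<n}" unfolding maxprice_def using Max_in[OF fin ne] .
    thus ?thesis using Pb that by auto
  qed
  have Ab: "1 \<le> A1 \<theta> r n (P \<omega>) y \<and> A1 \<theta> r n (P \<omega>) y \<le> \<theta>" if "\<omega> \<in> space M" for \<omega>
    using A1_range[of \<theta> r n "P \<omega>" y] Pb that th by auto
  have Rb: "0 \<le> maxprice n (P \<omega>) * Eff (maxprice n (P \<omega>)) y powr s \<and>
      maxprice n (P \<omega>) * Eff (maxprice n (P \<omega>)) y powr s \<le> \<theta>" if "\<omega> \<in> space M" for \<omega>
  proof -
    let ?m = "maxprice n (P \<omega>)"
    have m: "1 \<le> ?m" "?m \<le> \<theta>" using Mb[OF that] by auto
    have E0: "Eff ?m y > 0" unfolding Eff_def using m y1 by simp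
    have E1: "Eff ?m y \<le> 1"
    proof (cases "?m \<le> y")
      case True
      then have "?m/y \<le> 1" using m by simp
      then show ?thesis by (simp add: Eff_def min_def)
    next
      case False
      then have "y/?m \<le> 1" using y1 by simp
      then show ?thesis by (simp add: Eff_def min_def)
    qed
    have "Eff ?m y powr s \<le> 1" using E0 E1 sdef by (intro powr_le1) auto
    then have a: "?m * Eff ?m y powr s \<le> ?m * 1" using m by (intro mult_left_mono) auto
    have b: "0 \<le> ?m * Eff ?m y powr s" using m by simp
    show ?thesis using a b m by linarith
  qed
  have intA: "integrable M (\<lambda>\<omega>. A1 \<theta> r n (P \<omega>) y)"
    by (rule ps.integrable_const_bound[where B=\<theta>]) (use measA in \<open>auto intro!: AE_I2 dest!: Ab\<close>)
  have intM: "integrable M (\<lambda>\<omega>. maxprice n (P \<omega>))"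
    by (rule ps.integrable_const_bound[where B=\<theta>]) (use measM in \<open>auto intro!: AE_I2 dest!: Mb\<close>)
  have intR: "integrable M (\<lambda>\<omega>. maxprice n (P \<omega>) * Eff (maxprice n (P \<omega>)) y powr s)"
    by (rule ps.integrable_const_bound[where B=\<theta>]) (use measR in \<open>auto intro!: AE_I2 dest!: Rb\<close>)
  have le: "(\<integral>\<omega>. 1/(r*\<theta>) * (maxprice n (P \<omega>) * Eff (maxprice n (P \<omega>)) y powr s) \<partial>M)
      \<le> (\<integral>\<omega>. A1 \<theta> r n (P \<omega>) y \<partial>M)"
    by (rule integral_mono) (use intR intA pointwise[OF th r1 r2 sdef n1 _ y1 y2] Pb in auto)
  then have le2: "1/(r*\<theta>) * (\<integral>\<omega>. maxprice n (P \<omega>) * Eff (maxprice n (P \<omega>)) y powr s \<partial>M)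
      \<le> (\<integral>\<omega>. A1 \<theta> r n (P \<omega>) y \<partial>M)" by simp
  have "(\<integral>\<omega>. 1 \<partial>M) \<le> (\<integral>\<omega>. maxprice n (P \<omega>) \<partial>M)"
    by (rule integral_mono) (use intM Mb in auto)
  then have Mpos: "(\<integral>\<omega>. maxprice n (P \<omega>) \<partial>M) > 0" using ps.prob_space by simp
  show ?thesis using divide_right_mono[OF le2, of "(\<integral>\<omega>. maxprice n (P \<omega>) \<partial>M)"] Mpos
    by simp
qed

end
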